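(* Let $S$ be a simple $(l,r)$-framed algebra, $C_S=\{\alpha\in\mathbb{Z}_2^{l+r}:S_{(0,\alpha)}\ne0\}$ (a subgroup), and let $\varepsilon:C_S\times C_S\to\{\pm1\}$ be a bimultiplicative map with $\varepsilon(\alpha,\alpha)=(-1)^{|\alpha|/2}$ and $\varepsilon(\alpha,\beta)\varepsilon(\beta,\alpha)=(-1)^{|\alpha\beta|}$ for all $\alpha,\beta\in C_S$. Let $\mathbb{C}[\hat C_S]$ be the algebra with basis $\{e_\alpha\}_{\alpha\in C_S}$ and product $e_\alpha e_\beta=\varepsilon(\alpha,\beta)e_{\alpha+\beta}$, graded by putting $e_\alpha$ in degree $(0,\alpha)$. Then there is a grading-preserving $\mathbb{C}$-algebra isomorphism between $A_S(0)=\bigoplus_{\alpha\in C_S}S_{(0,\alpha)}$ (with the product of $S$) and $\mathbb{C}[\hat C_S]$.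
   Context: Let $\mathrm{IS}=\{0,\frac12,\frac1{16}\}$ with fusion rule $\star$ (values are subsets): $0\star h=h\star0=\{h\}$, $\frac12\star\frac12=\{0\}$, $\frac12\star\frac1{16}=\frac1{16}\star\frac12=\{\frac1{16}\}$, $\frac1{16}\star\frac1{16}=\{0,\frac12\}$; $A(h_0,h_1,h_2,h_3)=\{h: h\in h_2\star h_3,\ h_0\in h_1\star h\}$. For $h\in A(h_0,h_1,h_2,h_3)$, $h'\in A(h_0,h_2,h_1,h_3)$ define $B^{h,h'}_{h_0,h_1,h_2,h_3}$: $B_{*,0,*,*}=B_{*,*,0,*}=1$; $B_{*,\frac12,\frac12,*}=-1$; $B_{a,\frac12,\frac1{16},a'}=B_{a,\frac1{16},\frac12,a'}=i$ if $a$ or $a'$ is $\frac12$, else $-i$; $B^{b,b'}_{a,\frac1{16},\frac1{16},a'}=e^{-\pi i/8}\cdot\{1$ if $a,a'\ne\frac1{16},a=a'$; $i$ if $a,a'\neq\frac1{16},a\ne a'$; $\frac{1+i}2$ if $a=a'=\frac1{16},b=b'$; $\frac{1-i}2$ if $a=a'=\frac1{16},b\neq b'\}$. $\mathrm{IS}^{(l,r)}=\mathrm{IS}^l\times\mathrm{IS}^r$, $\lambda=(h_1,..,h_l,\bar h_1,..,\bar h_r)$, $s(\lambda)=\sum h_i-\sum\bar h_j$; $\star$, $A$ componentwise; $B^{\lambda,\lambda'}_{\lambda^0,\dots,\lambda^3}=\prod_{i\le l}B^{h_i,h'_i}_{h^0_i,\dots,h^3_i}\prod_{j\le r}\overline{B^{\bar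 h_j,\bar h'_j}_{\bar h^0_j,\dots,\bar h^3_j}}$. An $(l,r)$-framed algebra: finite-dimensional $\mathrm{IS}^{(l,r)}$-graded $S=\bigoplus S_\lambda$ over $\mathbb{C}$ with bilinear product, nonzero $1\in S_0$, $a\cdot_\lambda b$ the $S_\lambda$-component of $a\cdot b$, satisfying (FA1) $S_\lambda=0$ unless $s(\lambda)\in\mathbb{Z}$; (FA2) $S_0=\mathbb{C}1$, $1$ a two-sided unit; (FA3) $S_{\lambda^1}\cdot S_{\lambda^2}\subset\bigoplus_{\lambda\in\lambda^1\star\lambda^2}S_\lambda$; (FA4) $a_2\cdot_{\lambda^0}(a_1\cdot_{\lambda'}a_3)=\sum_{\lambda\in A(\lambda^0,\lambda^1,\lambda^2,\lambda^3)}B^{\lambda,\lambda'}_{\lambda^0,\lambda^1,\lambda^2,\lambda^3}a_1\cdot_{\lambda^0}(a_2\cdot_\lambda a_3)$ for $a_i\in S_{\lambda^i}$, $\lambda'\in A(\lambda^0,\lambda^2,\lambda^1,\lambda^3)$. Ideal: graded subspace $M$ with $S\cdot M\subset M$; simple: only ideals $0$ and $S$. Identify $\mathrm{IS}$ with $\{(d,c)\in\mathbb{Z}_2^2:dc=0\}$ via $0\leftrightarrow(0,0)$, $\frac12\leftrightarrow(0,1)$, $\frac1{16}\leftrightarrow(1,0)$, and componentwise $\mathrm{IS}^{(l,r)}$ with pairs $(d,c)\in(\mathbb{Z}_2^{l+r})^2$, $dc=0$. For $c\in\mathbb{Z}_2^{l+r}$, $|c|=|c|_l-|c|_r$ where $|c|_l,|c|_r$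 count ones in the first $l$ and last $r$ coordinates; products of codewords are componentwise. *)

theory Defs
  imports "HOL-Analysis.Analysis"
begin

datatype isv = I0 | Ih | Is

fun isval :: "isv \<Rightarrow> real" where
  "isval I0 = 0" | "isval Ih = 1/2" | "isval Is = 1/16"

fun fus :: "isv \<Rightarrow> isv \<Rightarrow> isv set" where
  "fus I0 h = {h}"
| "fus h I0 = {h}"
| "fus Ih Ih = {I0}"
| "fus Ih Is = {Is}"
| "fus Is Ih = {Is}"
| "fus Is Is = {I0, Ih}"

text \<open>Single-coordinate braiding coefficient; arguments (h, h', h0, h1, h2, h3)
  stand for B^{h,h'}_{h0,h1,h2,h3}.  Values at argument combinations not covered by
  the definition (which never occur with h in A(h0,h1,h2,h3)) are set to 0.\<close>

definition Bis :: "isv \<Rightarrow> isv \<Rightarrow> isv \<Rightarrow> isv \<Rightarrow> isv \<Rightarrow> isv \<Rightarrow> complex" where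
  "Bis h h' h0 h1 h2 h3 =
    (if h1 = I0 \<or> h2 = I0 then 1
     else if h1 = Ih \<and> h2 = Ih then -1
     else if (h1 = Ih \<and> h2 = Is) \<or> (h1 = Is \<and> h2 = Ih) then
       (if h0 = Ih \<or> h3 = Ih then \<i> else - \<i>)
     else \<comment> \<open>h1 = h2 = 1/16\<close>
       exp (- (pi * \<i> / 8)) *
       (if h0 \<noteq> Is \<and> h3 \<noteq> Is then (if h0 = h3 then 1 else \<i>)
        else if h0 = Is \<and> h3 = Is then
          (if h = h' then (1 + \<i>) / 2 else (1 - \<i>) / 2)
        else 0))"

text \<open>A degree in IS^(l,r) is a function nat => isv that is I0 outside {0..<l+r};
  coordinates 0..<l are the left ones, l..<l+r the right ones.\<close>

type_synonym lam = "nat \<Rightarrow> isv"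

definition Lam :: "nat \<Rightarrow> nat \<Rightarrow> lam set" where
  "Lam l r = {\<kappa>. \<forall>i\<ge>l+r. \<kappa> i = I0}"

definition lam0 :: lam where "lam0 = (\<lambda>_. I0)"

definition sdeg :: "nat \<Rightarrow> nat \<Rightarrow> lam \<Rightarrow> real" where
  "sdeg l r \<kappa> = (\<Sum>i<l. isval (\<kappa> i)) - (\<Sum>j\<in>{l..<l+r}. isval (\<kappa> j))"

definition lstar :: "nat \<Rightarrow> nat \<Rightarrow> lam \<Rightarrow> lam \<Rightarrow> lam set" where
  "lstar l r \<kappa>1 \<kappa>2 = {\<kappa> \<in> Lam l r. \<forall>i<l+r. \<kappa> i \<in> fus (\<kappa>1 i) (\<kappa>2 i)}"

definition lA :: "nat \<Rightarrow> nat \<Rightarrow> lam \<Rightarrow> lam \<Rightarrow> lam \<Rightarrow> lam \<Rightarrow> lam set" where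
  "lA l r \<kappa>0 \<kappa>1 \<kappa>2 \<kappa>3 = {\<kappa>. \<kappa> \<in> lstar l r \<kappa>2 \<kappa>3 \<and> \<kappa>0 \<in> lstar l r \<kappa>1 \<kappa>}"

definition lB :: "nat \<Rightarrow> nat \<Rightarrow> lam \<Rightarrow> lam \<Rightarrow> lam \<Rightarrow> lam \<Rightarrow> lam \<Rightarrow> lam \<Rightarrow> complex" where
  "lB l r \<kappa> \<kappa>' \<kappa>0 \<kappa>1 \<kappa>2 \<kappa>3 =
     (\<Prod>i<l. Bis (\<kappa> i) (\<kappa>' i) (\<kappa>0 i) (\<kappa>1 i) (\<kappa>2 i) (\<kappa>3 i)) *
     (\<Prod>j\<in>{l..<l+r}. cnj (Bis (\<kappa> j) (\<kappa>' j) (\<kappa>0 j) (\<kappa>1 j) (\<kappa>2 j) (\<kappa>3 j)))"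

definition graded :: "nat \<Rightarrow> nat \<Rightarrow> (complex \<Rightarrow> 'v::ab_group_add \<Rightarrow> 'v) \<Rightarrow> (lam \<Rightarrow> 'v set) \<Rightarrow> bool" where
  "graded l r smul S \<longleftrightarrow>
     (\<forall>\<kappa>\<in>Lam l r. module.subspace smul (S \<kappa>)) \<and>
     (\<forall>v. \<exists>!f. (\<forall>\<kappa>. \<kappa> \<notin> Lam l r \<longrightarrow> f \<kappa> = 0) \<and> (\<forall>\<kappa>\<in>Lam l r. f \<kappa> \<in> S \<kappa>) \<and>
               v = (\<Sum>\<kappa>\<in>Lam l r. f \<kappa>))"

definition comp :: "nat \<Rightarrow> nat \<Rightarrow> (lam \<Rightarrow> 'v::ab_group_add set) \<Rightarrow> lam \<Rightarrow> 'v \<Rightarrow> 'v" where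
  "comp l r S \<kappa> v = (THE f. (\<forall>\<mu>. \<mu> \<notin> Lam l r \<longrightarrow> f \<mu> = 0) \<and> (\<forall>\<mu>\<in>Lam l r. f \<mu> \<in> S \<mu>) \<and>
               v = (\<Sum>\<mu>\<in>Lam l r. f \<mu>)) \<kappa>"

definition framed_algebra ::
  "nat \<Rightarrow> nat \<Rightarrow> (complex \<Rightarrow> 'v::ab_group_add \<Rightarrow> 'v) \<Rightarrow> ('v \<Rightarrow> 'v \<Rightarrow> 'v) \<Rightarrow> 'v \<Rightarrow> (lam \<Rightarrow> 'v set) \<Rightarrow> bool"
where
  "framed_algebra l r smul mul one S \<longleftrightarrow>
     Vector_Spaces.vector_space smul \<and>
     (\<exists>B. finite B \<and> module.span smul B = UNIV) \<and>
     graded l r smul S \<and>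
     \<comment> \<open>bilinear product\<close>
     (\<forall>a b c. mul (a + b) c = mul a c + mul b c) \<and>
     (\<forall>a b c. mul a (b + c) = mul a b + mul a c) \<and>
     (\<forall>x a b. mul (smul x a) b = smul x (mul a b)) \<and>
     (\<forall>x a b. mul a (smul x b) = smul x (mul a b)) \<and>
     \<comment> \<open>FA1\<close>
     (\<forall>\<kappa>\<in>Lam l r. sdeg l r \<kappa> \<notin> \<int> \<longrightarrow> S \<kappa> = {0}) \<and>
     \<comment> \<open>FA2\<close>
     one \<noteq> 0 \<and> one \<in> S lam0 \<and> S lam0 = {smul x one | x. True} \<and>
     (\<forall>a. mul one a = a \<and> mul a one = a) \<and>
     \<comment> \<open>FA3\<close>
     (\<forall>\<kappa>1\<in>Lam l r. \<forall>\<kappa>2\<in>Lam l r. \<forall>a\<in>S \<kappa>1. \<forall>b\<in>S \<kappa>2.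
         \<forall>\<kappa>\<in>Lam l r. \<kappa> \<notin> lstar l r \<kappa>1 \<kappa>2 \<longrightarrow> comp l r S \<kappa> (mul a b) = 0) \<and>
     \<comment> \<open>FA4\<close>
     (\<forall>\<kappa>0\<in>Lam l r. \<forall>\<kappa>1\<in>Lam l r. \<forall>\<kappa>2\<in>Lam l r. \<forall>\<kappa>3\<in>Lam l r.
       \<forall>a1\<in>S \<kappa>1. \<forall>a2\<in>S \<kappa>2. \<forall>a3\<in>S \<kappa>3. \<forall>\<kappa>'\<in>lA l r \<kappa>0 \<kappa>2 \<kappa>1 \<kappa>3.
         comp l r S \<kappa>0 (mul a2 (comp l r S \<kappa>' (mul a1 a3))) =
         (\<Sum>\<kappa>\<in>lA l r \<kappa>0 \<kappa>1 \<kappa>2 \<kappa>3.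
            smul (lB l r \<kappa> \<kappa>' \<kappa>0 \<kappa>1 \<kappa>2 \<kappa>3) (comp l r S \<kappa>0 (mul a1 (comp l r S \<kappa> (mul a2 a3))))))"

definition is_ideal ::
  "nat \<Rightarrow> nat \<Rightarrow> (complex \<Rightarrow> 'v::ab_group_add \<Rightarrow> 'v) \<Rightarrow> ('v \<Rightarrow> 'v \<Rightarrow> 'v) \<Rightarrow> (lam \<Rightarrow> 'v set) \<Rightarrow> 'v set \<Rightarrow> bool"
where
  "is_ideal l r smul mul S M \<longleftrightarrow>
     module.subspace smul M \<and> (\<forall>v\<in>M. \<forall>\<kappa>\<in>Lam l r. comp l r S \<kappa> v \<in> M) \<and>
     (\<forall>a. \<forall>m\<in>M. mul a m \<in> M)"

definition simple_framed_algebra ::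
  "nat \<Rightarrow> nat \<Rightarrow> (complex \<Rightarrow> 'v::ab_group_add \<Rightarrow> 'v) \<Rightarrow> ('v \<Rightarrow> 'v \<Rightarrow> 'v) \<Rightarrow> 'v \<Rightarrow> (lam \<Rightarrow> 'v set) \<Rightarrow> bool"
where
  "simple_framed_algebra l r smul mul one S \<longleftrightarrow>
     framed_algebra l r smul mul one S \<and>
     (\<forall>M. is_ideal l r smul mul S M \<longrightarrow> M = {0} \<or> M = UNIV)"

text \<open>Elements of Z_2^{l+r} are represented as subsets of {..<l+r} (their supports);
  addition is symmetric difference, the componentwise product is intersection.\<close>

definition codeword :: "nat \<Rightarrow> nat \<Rightarrow> nat set \<Rightarrow> bool" where
  "codeword l r \<alpha> \<longleftrightarrow> \<alpha> \<subseteq> {..<l+r}"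

definition cadd :: "nat set \<Rightarrow> nat set \<Rightarrow> nat set" where
  "cadd \<alpha> \<beta> = (\<alpha> - \<beta>) \<union> (\<beta> - \<alpha>)"

definition cmul :: "nat set \<Rightarrow> nat set \<Rightarrow> nat set" where
  "cmul \<alpha> \<beta> = \<alpha> \<inter> \<beta>"

definition cwt :: "nat \<Rightarrow> nat \<Rightarrow> nat set \<Rightarrow> int" where
  "cwt l r \<alpha> = int (card (\<alpha> \<inter> {..<l})) - int (card (\<alpha> \<inter> {l..<l+r}))"

text \<open>The degree (d,c) = (0,\<alpha>): coordinate i is 1/2 if \<alpha>_i = 1 and 0 otherwise.\<close>
definition deg0 :: "nat set \<Rightarrow> lam" where
  "deg0 \<alpha> = (\<lambda>i. if i \<in> \<alpha> then Ih else I0)"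

definition CS :: "nat \<Rightarrow> nat \<Rightarrow> (lam \<Rightarrow> 'v::zero set) \<Rightarrow> nat set set" where
  "CS l r S = {\<alpha>. codeword l r \<alpha> \<and> S (deg0 \<alpha>) \<noteq> {0}}"

definition AS0 :: "nat \<Rightarrow> nat \<Rightarrow> (lam \<Rightarrow> 'v::ab_group_add set) \<Rightarrow> 'v set" where
  "AS0 l r S = {(\<Sum>\<alpha>\<in>CS l r S. x \<alpha>) | x. \<forall>\<alpha>\<in>CS l r S. x \<alpha> \<in> S (deg0 \<alpha>)}"

text \<open>Elements are coefficient functions f with f \<alpha> = 0 outside C (f = \<Sum> f \<alpha> e_\<alpha>).\<close>
definition tw_carrier :: "nat set set \<Rightarrow> (nat set \<Rightarrow> complex) set" where
  "tw_carrier C = {f. \<forall>\<alpha>. \<alpha> \<notin> C \<longrightarrow> f \<alpha> = 0}"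

text \<open>e_\<alpha> e_\<beta> = \<epsilon>(\<alpha>,\<beta>) e_{\<alpha>+\<beta>}, extended bilinearly.\<close>
definition tw_mult :: "nat set set \<Rightarrow> (nat set \<Rightarrow> nat set \<Rightarrow> complex) \<Rightarrow>
    (nat set \<Rightarrow> complex) \<Rightarrow> (nat set \<Rightarrow> complex) \<Rightarrow> (nat set \<Rightarrow> complex)" where
  "tw_mult C eps f g = (\<lambda>\<gamma>. \<Sum>(\<alpha>, \<beta>)\<in>{(\<alpha>, \<beta>). \<alpha> \<in> C \<and> \<beta> \<in> C \<and> cadd \<alpha> \<beta> = \<gamma>}.
                                eps \<alpha> \<beta> * f \<alpha> * g \<beta>)"

definition tw_hom :: "nat set set \<Rightarrow> nat set \<Rightarrow> (nat set \<Rightarrow> complex) set" where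
  "tw_hom C \<alpha> = {f \<in> tw_carrier C. \<forall>\<beta>. \<beta> \<noteq> \<alpha> \<longrightarrow> f \<beta> = 0}"

end

theory Submission
  imports Defs
begin

lemma isv_UNIV: "(UNIV :: isv set) = {I0, Ih, Is}"
  using isv.exhaust by auto

lemma finite_Lam: "finite (Lam l r)"
proof -
  have "Lam l r \<subseteq> (\<lambda>f i. if i < l+r then f i else I0) ` (PiE {..<l+r} (\<lambda>_. UNIV))"
  proof
    fix k assume k: "k \<in> Lam l r"
    have "k = (\<lambda>i. if i < l+r then restrict k {..<l+r} i else I0)"
      using k by (auto simp: Lam_def fun_eq_iff)
    moreover have "restrict k {..<l+r} \<in> PiE {..<l+r} (\<lambda>_. UNIV)" by auto
    ultimately show "k \<in> (\<lambda>f i. if i < l+r then f i else I0) ` (PiE {..<l+r} (\<lambda>_. UNIV))"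
      by blast
  qed
  moreover have "finite (PiE {..<l+r} (\<lambda>_. UNIV :: isv set))"
    by (rule finite_PiE) (auto simp: isv_UNIV)
  ultimately show ?thesis by (meson finite_imageI finite_subset)
qed

fun flip :: "isv \<Rightarrow> isv" where
  "flip I0 = Ih" | "flip Ih = I0" | "flip Is = Is"

lemma fus_I0[simp]: "fus I0 x = {x}" by simp
lemma fus_I0r[simp]: "fus x I0 = {x}" by (cases x) auto
lemma fus_Ih[simp]: "fus Ih x = {flip x}" by (cases x) auto

definition sh :: "nat set \<Rightarrow> lam \<Rightarrow> lam" where
  "sh a k = (\<lambda>i. if i \<in> a then flip (k i) else k i)"

lemma flip_flip[simp]: "flip (flip x) = x" by (cases x) auto

lemma sh_sh[simp]: "sh a (sh a k) = k" by (auto simp: sh_def)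

lemma deg0_in_Lam: "codeword l r a \<Longrightarrow> deg0 a \<in> Lam l r"
  by (auto simp: codeword_def deg0_def Lam_def)

lemma lam0_in_Lam: "lam0 \<in> Lam l r" by (auto simp: lam0_def Lam_def)

lemma deg0_empty[simp]: "deg0 {} = lam0" by (auto simp: deg0_def lam0_def)

lemma deg0_inj: assumes "deg0 a = deg0 b" shows "a = b"
proof -
  { fix x have "deg0 a x = deg0 b x" using assms by simp
    then have "x \<in> a \<longleftrightarrow> x \<in> b" by (auto simp: deg0_def split: if_splits) }
  then show ?thesis by blast
qed

lemma sh_in_Lam: "codeword l r a \<Longrightarrow> k \<in> Lam l r \<Longrightarrow> sh a k \<in> Lam l r"
  by (auto simp: codeword_def sh_def Lam_def)

lemma sh_deg0: "sh a (deg0 b) = deg0 (cadd a b)"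
  by (auto simp: sh_def deg0_def cadd_def fun_eq_iff)

lemma sh_lam0: "sh a lam0 = deg0 a"
  by (auto simp: sh_def deg0_def lam0_def fun_eq_iff)

lemma lstar_deg0: assumes "codeword l r a" "k \<in> Lam l r"
  shows "lstar l r (deg0 a) k = {sh a k}"
proof -
  have "x \<in> lstar l r (deg0 a) k \<longleftrightarrow> x = sh a k" for x
  proof
    assume "x \<in> lstar l r (deg0 a) k"
    then have x: "x \<in> Lam l r" "\<forall>i<l+r. x i \<in> fus (deg0 a i) (k i)" by (auto simp: lstar_def)
    show "x = sh a k"
    proof
      fix i show "x i = sh a k i"
      proof (cases "i < l+r")
        case True then show ?thesis using x(2)[rule_format, OF True]
          by (auto simp: deg0_def sh_def split: if_splits)
      next
        case False then show ?thesis using x(1) assms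
          by (auto simp: Lam_def sh_def codeword_def)
      qed
    qed
  next
    assume x: "x = sh a k"
    have "\<forall>i<l+r. x i \<in> fus (deg0 a i) (k i)" unfolding x by (auto simp: deg0_def sh_def)
    then show "x \<in> lstar l r (deg0 a) k"
      using sh_in_Lam[OF assms] x by (auto simp: lstar_def)
  qed
  then show ?thesis by blast
qed

lemma lstar_lam0r: assumes "k \<in> Lam l r" shows "lstar l r k lam0 = {k}"
proof -
  have "x = k" if "x \<in> Lam l r" "\<forall>i<l+r. x i = k i" for x
  proof
    fix i show "x i = k i" using that assms by (cases "i < l+r") (auto simp: Lam_def)
  qed
  then show ?thesis using assms by (auto simp: lstar_def lam0_def)
qed

lemma codeword_cadd: "codeword l r a \<Longrightarrow> codeword l r b \<Longrightarrow> codeword l r (cadd a b)"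
  by (auto simp: codeword_def cadd_def)

lemma cadd_comm: "cadd a b = cadd b a" by (auto simp: cadd_def)
lemma cadd_assoc: "cadd (cadd a b) c = cadd a (cadd b c)" by (auto simp: cadd_def)
lemma cadd_self[simp]: "cadd a a = {}" by (auto simp: cadd_def)
lemma cadd_empty[simp]: "cadd {} a = a" "cadd a {} = a" by (auto simp: cadd_def)
lemma cadd_cancel[simp]: "cadd a (cadd a b) = b" "cadd (cadd b a) a = b" by (auto simp: cadd_def)

lemma prod_sign: "finite A \<Longrightarrow> (\<Prod>i\<in>A. if P i then c else 1) = c ^ card {i\<in>A. P i}"
  by (simp add: prod.inter_filter[symmetric])

lemma card_split: assumes "codeword l r c"
  shows "card c = card (c \<inter> {..<l}) + card (c \<inter> {l..<l+r})"
proof -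
  have ceq: "c = (c \<inter> {..<l}) \<union> (c \<inter> {l..<l+r})" using assms by (auto simp: codeword_def)
  have d: "(c \<inter> {..<l}) \<inter> (c \<inter> {l..<l+r}) = {}" by auto
  have f: "finite (c \<inter> {..<l})" "finite (c \<inter> {l..<l+r})" by auto
  show ?thesis using card_Un_disjoint[OF f d] ceq by simp
qed

lemma lB_deg0:
  assumes "codeword l r a" "codeword l r b"
  shows "lB l r k k' k0 (deg0 a) (deg0 b) k3 = (-1) ^ card (a \<inter> b)"
proof -
  have B: "Bis x y z (deg0 a i) (deg0 b i) w = (if i \<in> a \<inter> b then -1 else 1)" for x y z w i
    by (auto simp: Bis_def deg0_def)
  have "lB l r k k' k0 (deg0 a) (deg0 b) k3 =
     (\<Prod>i<l. if i \<in> a \<inter> b then -1 else 1) * (\<Prod>j\<in>{l..<l+r}. if j \<in> a \<inter> b then -1 else 1)"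
    unfolding lB_def B by (intro arg_cong2[where f="(*)"] prod.cong) auto
  also have "\<dots> = (-1) ^ card {i\<in>{..<l}. i \<in> a \<inter> b} * (-1) ^ card {i\<in>{l..<l+r}. i \<in> a \<inter> b}"
    by (simp add: prod_sign)
  also have "\<dots> = (-1) ^ (card {i\<in>{..<l}. i \<in> a \<inter> b} + card {i\<in>{l..<l+r}. i \<in> a \<inter> b})"
    by (simp add: power_add)
  also have "card {i\<in>{..<l}. i \<in> a \<inter> b} + card {i\<in>{l..<l+r}. i \<in> a \<inter> b} = card (a \<inter> b)"
  proof -
    have "codeword l r (a \<inter> b)" using assms by (auto simp: codeword_def)
    from card_split[OF this] show ?thesis by (simp add: Int_def conj_commute)
  qed
  finally show ?thesis .
qed

lemma cwt_sign:
  assumes "codeword l r a"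
  shows "((-1)::complex) powi (cwt l r a) = (-1) ^ card a"
proof -
  note c = card_split[OF assms]
  have "((-1)::complex) powi (cwt l r a) = (-1) ^ card (a \<inter> {..<l}) / (-1) ^ card (a \<inter> {l..<l+r})"
    unfolding cwt_def by (simp add: power_int_diff)
  also have "\<dots> = (-1) ^ card (a \<inter> {..<l}) * (-1) ^ card (a \<inter> {l..<l+r})"
    by (cases "even (card (a \<inter> {l..<l+r}))") auto
  finally show ?thesis by (simp add: c power_add)
qed

locale FA =
  fixes l r :: nat and smul :: "complex \<Rightarrow> 'v::ab_group_add \<Rightarrow> 'v"
    and mul :: "'v \<Rightarrow> 'v \<Rightarrow> 'v" and one :: 'v and S :: "lam \<Rightarrow> 'v set"
  assumes fa: "framed_algebra l r smul mul one S"
begin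

lemma vs: "Vector_Spaces.vector_space smul" using fa unfolding framed_algebra_def by (elim conjE) assumption

sublocale vs: vector_space smul by (rule vs)

abbreviation "L \<equiv> Lam l r"
abbreviation "cp \<equiv> comp l r S"

lemma graded: "graded l r smul S" using fa unfolding framed_algebra_def by blast

lemma subsp: "k \<in> L \<Longrightarrow> vs.subspace (S k)" using graded by (simp add: graded_def)

lemma zero_in: "k \<in> L \<Longrightarrow> 0 \<in> S k" using subsp vs.subspace_0 by blast
lemma add_in: "k \<in> L \<Longrightarrow> x \<in> S k \<Longrightarrow> y \<in> S k \<Longrightarrow> x + y \<in> S k"
  using subsp vs.subspace_add by blast
lemma smul_in: "k \<in> L \<Longrightarrow> x \<in> S k \<Longrightarrow> smul c x \<in> S k"
  using subsp vs.subspace_scale by blast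

lemma mul_add_l: "mul (a + b) c = mul a c + mul b c" using fa unfolding framed_algebra_def by (elim conjE) simp
lemma mul_add_r: "mul a (b + c) = mul a b + mul a c" using fa unfolding framed_algebra_def by (elim conjE) simp
lemma mul_smul_l: "mul (smul x a) b = smul x (mul a b)" using fa unfolding framed_algebra_def by (elim conjE) simp
lemma mul_smul_r: "mul a (smul x b) = smul x (mul a b)" using fa unfolding framed_algebra_def by (elim conjE) simp
lemma one_mul[simp]: "mul one a = a" using fa unfolding framed_algebra_def by (elim conjE) simp
lemma mul_one[simp]: "mul a one = a" using fa unfolding framed_algebra_def by (elim conjE) simp
lemma one_ne: "one \<noteq> 0" using fa unfolding framed_algebra_def by (elim conjE) assumption
lemma one_in: "one \<in> S lam0" using fa unfolding framed_algebra_def by (elim conjE) assumption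
lemma S0: "S lam0 = {smul x one | x. True}" using fa unfolding framed_algebra_def by (elim conjE) assumption

interpretation ml: additive "\<lambda>a. mul a b" for b by standard (rule mul_add_l)
interpretation mr: additive "\<lambda>b. mul a b" for a by standard (rule mul_add_r)

lemma mul_0_l[simp]: "mul 0 b = 0" by (rule ml.zero)
lemma mul_0_r[simp]: "mul a 0 = 0" by (rule mr.zero)
lemma mul_diff_r: "mul a (b - c) = mul a b - mul a c" by (rule mr.diff)
lemma mul_sum_l: "mul (sum g A) b = (\<Sum>x\<in>A. mul (g x) b)" by (rule ml.sum)
lemma mul_sum_r: "mul a (sum g A) = (\<Sum>x\<in>A. mul a (g x))" by (rule mr.sum)

lemma comp_unique:
  assumes "\<forall>k. k \<notin> L \<longrightarrow> f k = 0" "\<forall>k\<in>L. f k \<in> S k" "v = (\<Sum>k\<in>L. f k)"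
  shows "cp k v = f k"
proof -
  have ex: "\<exists>!f. (\<forall>k. k \<notin> L \<longrightarrow> f k = 0) \<and> (\<forall>k\<in>L. f k \<in> S k) \<and> v = (\<Sum>k\<in>L. f k)"
    using graded by (simp add: graded_def)
  have "(THE f. (\<forall>k. k \<notin> L \<longrightarrow> f k = 0) \<and> (\<forall>k\<in>L. f k \<in> S k) \<and> v = (\<Sum>k\<in>L. f k)) = f"
    by (rule the1_equality[OF ex]) (use assms in auto)
  then show ?thesis unfolding comp_def by simp
qed

lemma comp_props: "(\<forall>k. k \<notin> L \<longrightarrow> cp k v = 0) \<and> (\<forall>k\<in>L. cp k v \<in> S k) \<and> v = (\<Sum>k\<in>L. cp k v)"
proof -
  have ex: "\<exists>!f. (\<forall>k. k \<notin> L \<longrightarrow> f k = 0) \<and> (\<forall>k\<in>L. f k \<in> S k) \<and> v = (\<Sum>k\<in>L. f k)"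
    using graded by (simp add: graded_def)
  define F where "F = (THE f. (\<forall>k. k \<notin> L \<longrightarrow> f k = 0) \<and> (\<forall>k\<in>L. f k \<in> S k) \<and> v = (\<Sum>k\<in>L. f k))"
  have P: "(\<forall>k. k \<notin> L \<longrightarrow> F k = 0) \<and> (\<forall>k\<in>L. F k \<in> S k) \<and> v = (\<Sum>k\<in>L. F k)"
    unfolding F_def by (rule theI'[OF ex])
  have "\<And>k. cp k v = F k" unfolding comp_def F_def by simp
  then show ?thesis using P by simp
qed

lemma comp_in: "k \<in> L \<Longrightarrow> cp k v \<in> S k" using comp_props by blast
lemma comp_out: "k \<notin> L \<Longrightarrow> cp k v = 0" using comp_props by blast
lemma comp_sum_all: "v = (\<Sum>k\<in>L. cp k v)" using comp_props by blast

lemma comp_hom: assumes "k \<in> L" "v \<in> S k" shows "cp m v = (if m = k then v else 0)"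
proof (rule comp_unique)
  show "\<forall>m. m \<notin> L \<longrightarrow> (if m = k then v else 0) = 0" using assms by auto
  show "\<forall>m\<in>L. (if m = k then v else 0) \<in> S m" using assms zero_in by auto
  show "v = (\<Sum>m\<in>L. if m = k then v else 0)" using assms finite_Lam by simp
qed

lemma comp_hom_same: "k \<in> L \<Longrightarrow> v \<in> S k \<Longrightarrow> cp k v = v" using comp_hom by simp

lemma comp_add: "cp k (u + v) = cp k u + cp k v"
proof (rule comp_unique)
  show "\<forall>k. k \<notin> L \<longrightarrow> cp k u + cp k v = 0" by (simp add: comp_out)
  show "\<forall>k\<in>L. cp k u + cp k v \<in> S k" by (simp add: add_in comp_in)
  show "u + v = (\<Sum>k\<in>L. cp k u + cp k v)"
    by (simp add: sum.distrib comp_sum_all[symmetric])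
qed

interpretation ca: additive "\<lambda>v. cp k v" for k by standard (rule comp_add)

lemma comp_0[simp]: "cp k 0 = 0" by (rule ca.zero)
lemma comp_sum: "cp k (sum g A) = (\<Sum>x\<in>A. cp k (g x))" by (rule ca.sum)

lemma comp_smul: "cp k (smul c v) = smul c (cp k v)"
proof (rule comp_unique)
  show "\<forall>k. k \<notin> L \<longrightarrow> smul c (cp k v) = 0" by (simp add: comp_out)
  show "\<forall>k\<in>L. smul c (cp k v) \<in> S k" by (simp add: smul_in comp_in)
  show "smul c v = (\<Sum>k\<in>L. smul c (cp k v))"
    by (simp add: vs.scale_sum_right[symmetric] comp_sum_all[symmetric])
qed

lemma all_comp_zero: "(\<And>k. k \<in> L \<Longrightarrow> cp k v = 0) \<Longrightarrow> v = 0"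
  using comp_sum_all[of v] by simp

lemma FA3: "k1 \<in> L \<Longrightarrow> k2 \<in> L \<Longrightarrow> a \<in> S k1 \<Longrightarrow> b \<in> S k2 \<Longrightarrow> k \<in> L \<Longrightarrow>
   k \<notin> lstar l r k1 k2 \<Longrightarrow> cp k (mul a b) = 0"
  using fa unfolding framed_algebra_def by (elim conjE) simp

lemma FA4: "k0 \<in> L \<Longrightarrow> k1 \<in> L \<Longrightarrow> k2 \<in> L \<Longrightarrow> k3 \<in> L \<Longrightarrow>
   a1 \<in> S k1 \<Longrightarrow> a2 \<in> S k2 \<Longrightarrow> a3 \<in> S k3 \<Longrightarrow> k' \<in> lA l r k0 k2 k1 k3 \<Longrightarrow>
   cp k0 (mul a2 (cp k' (mul a1 a3))) =
     (\<Sum>k\<in>lA l r k0 k1 k2 k3. smul (lB l r k k' k0 k1 k2 k3) (cp k0 (mul a1 (cp k (mul a2 a3)))))"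
  using fa unfolding framed_algebra_def by (elim conjE) simp

lemma mul_single:
  assumes "k1 \<in> L" "k2 \<in> L" "a \<in> S k1" "b \<in> S k2" "lstar l r k1 k2 = {k}"
  shows "mul a b \<in> S k"
proof -
  have kL: "k \<in> L" using assms(5) by (auto simp: lstar_def)
  have "mul a b = (\<Sum>m\<in>L. cp m (mul a b))" by (rule comp_sum_all)
  also have "\<dots> = (\<Sum>m\<in>L. if m = k then cp k (mul a b) else 0)"
    by (rule sum.cong) (use assms FA3 in auto)
  also have "\<dots> = cp k (mul a b)" using kL finite_Lam by simp
  finally show ?thesis using comp_in[OF kL] by metis
qed

lemma mul_deg0:
  assumes "codeword l r a" "x \<in> S (deg0 a)" "k \<in> L" "y \<in> S k"
  shows "mul x y \<in> S (sh a k)"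
  by (rule mul_single[OF deg0_in_Lam[OF assms(1)] assms(3) assms(2) assms(4)])
     (rule lstar_deg0[OF assms(1,3)])

lemma mul_deg0_deg0:
  assumes "codeword l r a" "codeword l r b" "x \<in> S (deg0 a)" "y \<in> S (deg0 b)"
  shows "mul x y \<in> S (deg0 (cadd a b))"
  using mul_deg0[OF assms(1,3) deg0_in_Lam[OF assms(2)] assms(4)] by (simp add: sh_deg0)

lemma comp_mul_shift:
  assumes "codeword l r a" "x \<in> S (deg0 a)" "k0 \<in> L"
  shows "cp k0 (mul x Y) = cp k0 (mul x (cp (sh a k0) Y))"
proof -
  have "cp k0 (mul x Y) = cp k0 (mul x (\<Sum>k\<in>L. cp k Y))" using comp_sum_all[of Y] by simp
  also have "\<dots> = (\<Sum>k\<in>L. cp k0 (mul x (cp k Y)))" by (simp add: mul_sum_r comp_sum)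
  also have "\<dots> = (\<Sum>k\<in>L. if k = sh a k0 then cp k0 (mul x (cp (sh a k0) Y)) else 0)"
  proof (rule sum.cong)
    fix k assume k: "k \<in> L"
    have m: "mul x (cp k Y) \<in> S (sh a k)" by (rule mul_deg0[OF assms(1,2) k comp_in[OF k]])
    show "cp k0 (mul x (cp k Y)) = (if k = sh a k0 then cp k0 (mul x (cp (sh a k0) Y)) else 0)"
      using comp_hom[OF sh_in_Lam[OF assms(1) k] m, of k0] by auto
  qed simp
  also have "\<dots> = cp k0 (mul x (cp (sh a k0) Y))"
    using sh_in_Lam[OF assms(1,3)] finite_Lam by simp
  finally show ?thesis .
qed

end

locale SFA = FA +
  assumes simple: "\<forall>M. is_ideal l r smul mul S M \<longrightarrow> M = {0} \<or> M = UNIV"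
begin

lemma kill_homog:
  assumes a: "codeword l r a" and x: "x \<in> S (deg0 a)" and m3: "k3 \<in> L" "m \<in> S k3"
    and k1: "k1 \<in> L" "b \<in> S k1" and z: "mul x m = 0"
  shows "mul x (mul b m) = 0"
proof (rule all_comp_zero)
  fix k0 assume k0: "k0 \<in> L"
  let ?k' = "sh a k0"
  have k'L: "?k' \<in> L" using sh_in_Lam[OF a k0] .
  have "cp k0 (mul x (mul b m)) = cp k0 (mul x (cp ?k' (mul b m)))"
    by (rule comp_mul_shift[OF a x k0])
  also have "\<dots> = 0"
  proof (cases "?k' \<in> lstar l r k1 k3")
    case True
    have "k0 \<in> lstar l r (deg0 a) ?k'" using lstar_deg0[OF a k'L] by simp
    then have inA: "?k' \<in> lA l r k0 (deg0 a) k1 k3" using True by (simp add: lA_def)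
    show ?thesis
      using FA4[OF k0 k1(1) deg0_in_Lam[OF a] m3(1) k1(2) x m3(2) inA] z by simp
  next
    case False
    then show ?thesis using FA3[OF k1(1) m3(1) k1(2) m3(2) k'L] by simp
  qed
  finally show "cp k0 (mul x (mul b m)) = 0" .
qed

lemma left_inj:
  assumes a: "codeword l r a" and x: "x \<in> S (deg0 a)" and xne: "x \<noteq> 0"
    and z: "mul x m = 0"
  shows "m = 0"
proof -
  define M where "M = {m. mul x m = 0}"
  have compM: "cp k m \<in> M" if "m \<in> M" "k \<in> L" for m k
  proof -
    have "cp (sh a k) (mul x (cp k m)) = cp (sh a k) (mul x m)"
      using comp_mul_shift[OF a x sh_in_Lam[OF a that(2)], of m] by simp
    also have "\<dots> = 0" using that(1) by (simp add: M_def)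
    finally have "cp (sh a k) (mul x (cp k m)) = 0" .
    moreover have "cp (sh a k) (mul x (cp k m)) = mul x (cp k m)"
      by (rule comp_hom_same[OF sh_in_Lam[OF a that(2)] mul_deg0[OF a x that(2) comp_in[OF that(2)]]])
    ultimately show ?thesis by (simp add: M_def)
  qed
  have "is_ideal l r smul mul S M"
    unfolding is_ideal_def
  proof (intro conjI ballI allI)
    show "vs.subspace M"
      unfolding vs.subspace_def M_def by (simp add: mul_add_r mul_smul_r)
    show "cp k v \<in> M" if "v \<in> M" "k \<in> L" for v k using compM that .
    show "mul b v \<in> M" if "v \<in> M" for b v
    proof -
      have "mul x (mul b v) = mul x (mul (\<Sum>k1\<in>L. cp k1 b) (\<Sum>k3\<in>L. cp k3 v))"
        using comp_sum_all[of b] comp_sum_all[of v] by simp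
      also have "\<dots> = (\<Sum>k3\<in>L. \<Sum>k1\<in>L. mul x (mul (cp k1 b) (cp k3 v)))"
        by (simp add: mul_sum_l mul_sum_r)
      also have "\<dots> = 0"
      proof (intro sum.neutral ballI)
        fix k1 k3 assume k3: "k3 \<in> L" and k1: "k1 \<in> L"
        have "mul x (cp k3 v) = 0" using compM[OF that k3] by (simp add: M_def)
        then show "mul x (mul (cp k1 b) (cp k3 v)) = 0"
          by (rule kill_homog[OF a x k3 comp_in[OF k3] k1 comp_in[OF k1]])
      qed
      finally show ?thesis by (simp add: M_def)
    qed
  qed
  then have "M = {0} \<or> M = UNIV" using simple by blast
  moreover have "one \<notin> M" using xne by (simp add: M_def)
  ultimately have "M = {0}" by blast
  then show ?thesis using z by (auto simp: M_def)
qed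

lemma sq_scalar:
  assumes a: "codeword l r a" and x: "x \<in> S (deg0 a)"
  shows "\<exists>c. mul x x = smul c one"
proof -
  have "mul x x \<in> S lam0" using mul_deg0_deg0[OF a a x x] by simp
  then show ?thesis using S0 by auto
qed

lemma one_dim:
  assumes a: "codeword l r a" and x: "x \<in> S (deg0 a)" and xne: "x \<noteq> 0" and y: "y \<in> S (deg0 a)"
  shows "\<exists>c. y = smul c x"
proof -
  obtain c where c: "mul x x = smul c one" using sq_scalar[OF a x] by blast
  have "mul x y \<in> S lam0" using mul_deg0_deg0[OF a a x y] by simp
  then obtain d where d: "mul x y = smul d one" using S0 by auto
  have cne: "c \<noteq> 0"
  proof
    assume "c = 0" then have "mul x x = 0" using c by simp
    then have "x = 0" by (rule left_inj[OF a x xne])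
    then show False using xne by simp
  qed
  have "mul x (y - smul (d / c) x) = 0"
    using cne by (simp add: mul_diff_r mul_smul_r c d)
  then have "y - smul (d / c) x = 0" by (rule left_inj[OF a x xne])
  then show ?thesis by auto
qed

lemma nonzero_elem:
  assumes "\<alpha> \<in> CS l r S" shows "\<exists>x\<in>S (deg0 \<alpha>). x \<noteq> 0"
proof -
  have "codeword l r \<alpha>" "S (deg0 \<alpha>) \<noteq> {0}" using assms by (auto simp: CS_def)
  moreover have "0 \<in> S (deg0 \<alpha>)" using zero_in[OF deg0_in_Lam[OF calculation(1)]] .
  ultimately show ?thesis by blast
qed

lemma codeword_empty: "codeword l r {}" by (simp add: codeword_def)

lemma CS_code: "\<alpha> \<in> CS l r S \<Longrightarrow> codeword l r \<alpha>" by (simp add: CS_def)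

lemma CS_empty: "{} \<in> CS l r S"
  using one_in one_ne by (auto simp: CS_def codeword_def)

lemma mul_ne:
  assumes a: "codeword l r a" "x \<in> S (deg0 a)" "x \<noteq> 0" and "y \<noteq> 0"
  shows "mul x y \<noteq> 0"
  using left_inj[OF a] assms(4) by blast

lemma CS_cadd:
  assumes "\<alpha> \<in> CS l r S" "\<beta> \<in> CS l r S" shows "cadd \<alpha> \<beta> \<in> CS l r S"
proof -
  obtain x where x: "x \<in> S (deg0 \<alpha>)" "x \<noteq> 0" using nonzero_elem[OF assms(1)] by blast
  obtain y where y: "y \<in> S (deg0 \<beta>)" "y \<noteq> 0" using nonzero_elem[OF assms(2)] by blast
  have a: "codeword l r \<alpha>" "codeword l r \<beta>" using assms by (auto simp: CS_def)
  have "mul x y \<in> S (deg0 (cadd \<alpha> \<beta>))" by (rule mul_deg0_deg0[OF a x(1) y(1)])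
  moreover have "mul x y \<noteq> 0" by (rule mul_ne[OF a(1) x y(2)])
  ultimately show ?thesis using codeword_cadd[OF a] by (auto simp: CS_def)
qed

lemma braid:
  assumes a: "codeword l r a" "codeword l r b" "codeword l r c"
    and x: "x \<in> S (deg0 a)" and y: "y \<in> S (deg0 b)" and z: "z \<in> S (deg0 c)"
  shows "mul y (mul x z) = smul ((-1) ^ card (a \<inter> b)) (mul x (mul y z))"
proof -
  let ?k0 = "deg0 (cadd a (cadd b c))"
  have L: "deg0 a \<in> L" "deg0 b \<in> L" "deg0 c \<in> L" "?k0 \<in> L"
    using a by (auto intro!: deg0_in_Lam codeword_cadd)
  have ac: "codeword l r (cadd a c)" "codeword l r (cadd b c)" using a by (auto intro: codeword_cadd)
  have A1: "lA l r ?k0 (deg0 b) (deg0 a) (deg0 c) = {deg0 (cadd a c)}"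
    unfolding lA_def using a ac L
    by (auto simp: lstar_deg0 deg0_in_Lam sh_deg0 cadd_assoc cadd_comm[of b a]
      dest: deg0_inj) (metis cadd_assoc cadd_comm)
  have A2: "lA l r ?k0 (deg0 a) (deg0 b) (deg0 c) = {deg0 (cadd b c)}"
    unfolding lA_def using a ac L
    by (auto simp: lstar_deg0 deg0_in_Lam sh_deg0 cadd_assoc dest: deg0_inj)
  have m1: "mul x z \<in> S (deg0 (cadd a c))" by (rule mul_deg0_deg0[OF a(1,3) x z])
  have m2: "mul y z \<in> S (deg0 (cadd b c))" by (rule mul_deg0_deg0[OF a(2,3) y z])
  have e1: "cadd b (cadd a c) = cadd a (cadd b c)" by (auto simp: cadd_def)
  have m3: "mul y (mul x z) \<in> S ?k0" using mul_deg0_deg0[OF a(2) ac(1) y m1] e1 by simp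
  have m4: "mul x (mul y z) \<in> S ?k0" using mul_deg0_deg0[OF a(1) ac(2) x m2] by simp
  have inA: "deg0 (cadd a c) \<in> lA l r ?k0 (deg0 b) (deg0 a) (deg0 c)" using A1 by simp
  have "cp ?k0 (mul y (cp (deg0 (cadd a c)) (mul x z))) =
     (\<Sum>k\<in>lA l r ?k0 (deg0 a) (deg0 b) (deg0 c). smul (lB l r k (deg0 (cadd a c)) ?k0 (deg0 a) (deg0 b) (deg0 c))
        (cp ?k0 (mul x (cp k (mul y z)))))"
    by (rule FA4[OF L(4) L(1) L(2) L(3) x y z inA])
  then show ?thesis
    using comp_hom_same[OF deg0_in_Lam[OF ac(1)] m1] comp_hom_same[OF deg0_in_Lam[OF ac(2)] m2]
      comp_hom_same[OF L(4) m3] comp_hom_same[OF L(4) m4]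
    by (simp add: A2 lB_deg0[OF a(1,2)])
qed

lemma commute:
  assumes a: "codeword l r a" "codeword l r b"
    and x: "x \<in> S (deg0 a)" and y: "y \<in> S (deg0 b)"
  shows "mul y x = smul ((-1) ^ card (a \<inter> b)) (mul x y)"
  using braid[OF a codeword_empty x y one_in[folded deg0_empty]] by simp

end

locale EFA = SFA +
  fixes eps :: "nat set \<Rightarrow> nat set \<Rightarrow> complex"
  assumes eps_pm: "\<forall>\<alpha>\<in>CS l r S. \<forall>\<beta>\<in>CS l r S. eps \<alpha> \<beta> \<in> {1, -1}"
    and eps_bimult1: "\<forall>\<alpha>\<in>CS l r S. \<forall>\<beta>\<in>CS l r S. \<forall>\<gamma>\<in>CS l r S.
                        eps (cadd \<alpha> \<beta>) \<gamma> = eps \<alpha> \<gamma> * eps \<beta> \<gamma>"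
    and eps_bimult2: "\<forall>\<alpha>\<in>CS l r S. \<forall>\<beta>\<in>CS l r S. \<forall>\<gamma>\<in>CS l r S.
                        eps \<alpha> (cadd \<beta> \<gamma>) = eps \<alpha> \<beta> * eps \<alpha> \<gamma>"
    and eps_diag: "\<forall>\<alpha>\<in>CS l r S. eps \<alpha> \<alpha> = (-1) powi (cwt l r \<alpha> div 2)"
    and eps_comm: "\<forall>\<alpha>\<in>CS l r S. \<forall>\<beta>\<in>CS l r S.
                     eps \<alpha> \<beta> * eps \<beta> \<alpha> = (-1) powi (cwt l r (cmul \<alpha> \<beta>))"
begin

abbreviation "C \<equiv> CS l r S"

lemma pm_cases: "x \<in> {1, -1} \<Longrightarrow> P 1 \<Longrightarrow> P (-1) \<Longrightarrow> P (x::complex)" by auto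

lemma epm: "a \<in> C \<Longrightarrow> b \<in> C \<Longrightarrow> eps a b \<in> {1, -1}" using eps_pm by blast
lemma b1: "a \<in> C \<Longrightarrow> b \<in> C \<Longrightarrow> c \<in> C \<Longrightarrow> eps (cadd a b) c = eps a c * eps b c"
  using eps_bimult1 by blast
lemma b2: "a \<in> C \<Longrightarrow> b \<in> C \<Longrightarrow> c \<in> C \<Longrightarrow> eps a (cadd b c) = eps a b * eps a c"
  using eps_bimult2 by blast

lemma sgn_eps: "a \<in> C \<Longrightarrow> b \<in> C \<Longrightarrow> (-1) ^ card (a \<inter> b) = eps a b * eps b a"
proof -
  assume ab: "a \<in> C" "b \<in> C"
  have "codeword l r (a \<inter> b)" using CS_code[OF ab(1)] by (auto simp: codeword_def)
  then show ?thesis using eps_comm ab cwt_sign by (simp add: cmul_def)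
qed

lemma eps_empty: "eps {} {} = 1"
  using eps_diag CS_empty by (simp add: cwt_def)

lemma smul_sign_twice: "s \<in> {1, -1} \<Longrightarrow> smul s (smul s w) = w"
  by auto

lemma assoc:
  assumes abc: "a \<in> C" "b \<in> C" "c \<in> C"
    and x: "x \<in> S (deg0 a)" and y: "y \<in> S (deg0 b)" and z: "z \<in> S (deg0 c)"
  shows "mul (mul x y) z = mul x (mul y z)"
proof -
  have cw: "codeword l r a" "codeword l r b" "codeword l r c" using abc CS_code by auto
  have ab: "cadd a b \<in> C" using CS_cadd abc by blast
  have xy: "mul x y \<in> S (deg0 (cadd a b))" by (rule mul_deg0_deg0[OF cw(1,2) x y])
  have 1: "mul z (mul x y) = smul ((-1) ^ card (cadd a b \<inter> c)) (mul (mul x y) z)"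
    by (rule commute[OF codeword_cadd[OF cw(1,2)] cw(3) xy z])
  have 2: "mul z (mul x y) = smul ((-1) ^ card (a \<inter> c)) (mul x (mul z y))"
    by (rule braid[OF cw(1,3,2) x z y])
  have 3: "mul z y = smul ((-1) ^ card (b \<inter> c)) (mul y z)"
    by (rule commute[OF cw(2,3) y z])
  have s: "(-1) ^ card (cadd a b \<inter> c) = eps a c * eps b c * (eps c a * eps c b)"
    using sgn_eps[OF ab abc(3)] b1[OF abc] b2[OF abc(3,1,2)] by simp
  have "mul (mul x y) z = smul ((-1) ^ card (cadd a b \<inter> c)) (mul z (mul x y))"
    using 1 s epm[OF abc(1,3)] epm[OF abc(2,3)] epm[OF abc(3,1)] epm[OF abc(3,2)]
    by (auto simp: mult_ac)
  also have "\<dots> = smul ((-1) ^ card (cadd a b \<inter> c) * (-1) ^ card (a \<inter> c) * (-1) ^ card (b \<inter> c)) (mul x (mul y z))"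
    using 2 3 by (simp add: mul_smul_r mult_ac)
  also have "(-1) ^ card (cadd a b \<inter> c) * (-1) ^ card (a \<inter> c) * (-1) ^ card (b \<inter> c) = (1::complex)"
    using s sgn_eps[OF abc(1,3)] sgn_eps[OF abc(2,3)] epm[OF abc(1,3)] epm[OF abc(2,3)] epm[OF abc(3,1)] epm[OF abc(3,2)]
    by auto
  finally show ?thesis by simp
qed

end

context EFA begin

definition good :: "nat set set \<Rightarrow> (nat set \<Rightarrow> _) \<Rightarrow> bool" where
  "good H e \<longleftrightarrow> (\<forall>\<alpha>\<in>H. e \<alpha> \<in> S (deg0 \<alpha>) \<and> e \<alpha> \<noteq> 0) \<and>
     (\<forall>\<alpha>\<in>H. \<forall>\<beta>\<in>H. mul (e \<alpha>) (e \<beta>) = smul (eps \<alpha> \<beta>) (e (cadd \<alpha> \<beta>)))"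

definition subgrp :: "nat set set \<Rightarrow> bool" where
  "subgrp H \<longleftrightarrow> H \<subseteq> C \<and> {} \<in> H \<and> (\<forall>\<alpha>\<in>H. \<forall>\<beta>\<in>H. cadd \<alpha> \<beta> \<in> H)"

lemma good_base: "good {{}} (\<lambda>_. one)"
  using one_in one_ne eps_empty by (simp add: good_def)

lemma subgrp_base: "subgrp {{}}"
  using CS_empty by (simp add: subgrp_def)

lemma extend:
  assumes H: "subgrp H" and e: "good H e" and g: "g \<in> C" "g \<notin> H"
  shows "\<exists>e'. good (H \<union> cadd g ` H) e' \<and> subgrp (H \<union> cadd g ` H)"
proof -
  have HC: "H \<subseteq> C" and H0: "{} \<in> H" and Hadd: "\<And>a b. a \<in> H \<Longrightarrow> b \<in> H \<Longrightarrow> cadd a b \<in> H"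
    using H by (auto simp: subgrp_def)
  have eS: "\<And>a. a \<in> H \<Longrightarrow> e a \<in> S (deg0 a)" and ene: "\<And>a. a \<in> H \<Longrightarrow> e a \<noteq> 0"
    and emul: "\<And>a b. a \<in> H \<Longrightarrow> b \<in> H \<Longrightarrow> mul (e a) (e b) = smul (eps a b) (e (cadd a b))"
    using e by (auto simp: good_def)
  have gc: "codeword l r g" using CS_code[OF g(1)] .
  obtain u0 where u0: "u0 \<in> S (deg0 g)" "u0 \<noteq> 0" using nonzero_elem[OF g(1)] by blast
  obtain c where c: "mul u0 u0 = smul c one" using sq_scalar[OF gc u0(1)] by blast
  have cne: "c \<noteq> 0"
  proof
    assume "c = 0" then have "mul u0 u0 = 0" using c by simp
    then show False using mul_ne[OF gc u0 u0(2)] by simp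
  qed
  define t where "t = csqrt (eps g g / c)"
  have tt: "t * t * c = eps g g" using cne unfolding t_def
    by (metis nonzero_eq_divide_eq power2_csqrt power2_eq_square)
  have egg: "eps g g \<in> {1, -1}" using epm[OF g(1) g(1)] .
  have tne: "t \<noteq> 0" using tt egg by auto
  define u where "u = smul t u0"
  have uS: "u \<in> S (deg0 g)" unfolding u_def by (rule smul_in[OF deg0_in_Lam[OF gc] u0(1)])
  have une: "u \<noteq> 0" unfolding u_def using tne u0(2) by simp
  have uu: "mul u u = smul (eps g g) one"
    unfolding u_def by (simp add: mul_smul_l mul_smul_r c tt[symmetric] mult_ac)
  define e' where "e' x = (if x \<in> H then e x else smul (eps g (cadd g x)) (mul u (e (cadd g x))))" for x
  have notH: "cadd g h \<notin> H" if "h \<in> H" for h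
  proof
    assume "cadd g h \<in> H" then have "cadd (cadd g h) h \<in> H" using Hadd that by blast
    then show False using g(2) by simp
  qed
  have e'H: "e' h = e h" if "h \<in> H" for h using that by (simp add: e'_def)
  have e'gH: "e' (cadd g h) = smul (eps g h) (mul u (e h))" if "h \<in> H" for h
    using that notH[OF that] by (simp add: e'_def)
  have hC: "\<And>h. h \<in> H \<Longrightarrow> h \<in> C" using HC by blast
  have hc: "\<And>h. h \<in> H \<Longrightarrow> codeword l r h" using HC CS_code by blast
  have ueS: "mul u (e h) \<in> S (deg0 (cadd g h))" if "h \<in> H" for h
    by (rule mul_deg0_deg0[OF gc hc[OF that] uS eS[OF that]])
  have cadd1: "cadd h (cadd g h') = cadd g (cadd h h')" for h h' by (auto simp: cadd_def)
  have cadd2: "cadd (cadd g h) h' = cadd g (cadd h h')" for h h' by (auto simp: cadd_def)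
  have cadd3: "cadd (cadd g h) (cadd g h') = cadd h h'" for h h' by (auto simp: cadd_def)
  have good': "good (H \<union> cadd g ` H) e'"
    unfolding good_def
  proof (rule conjI; intro ballI)
    fix x assume "x \<in> H \<union> cadd g ` H"
    then show "e' x \<in> S (deg0 x) \<and> e' x \<noteq> 0"
    proof
      assume "x \<in> H" then show ?thesis using e'H eS ene by simp
    next
      assume "x \<in> cadd g ` H"
      then obtain h where h: "h \<in> H" "x = cadd g h" by blast
      have "mul u (e h) \<noteq> 0" by (rule mul_ne[OF gc uS une ene[OF h(1)]])
      then show ?thesis using h e'gH[OF h(1)] smul_in[OF deg0_in_Lam[OF codeword_cadd[OF gc hc[OF h(1)]]] ueS[OF h(1)]]
        epm[OF g(1) hC[OF h(1)]] by auto
    qed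
  next
    fix x y assume x: "x \<in> H \<union> cadd g ` H" and y: "y \<in> H \<union> cadd g ` H"
    show "mul (e' x) (e' y) = smul (eps x y) (e' (cadd x y))"
    proof (cases "x \<in> H")
      case xH: True
      show ?thesis
      proof (cases "y \<in> H")
        case True then show ?thesis using xH e'H emul Hadd by simp
      next
        case False
        then obtain h' where h': "h' \<in> H" "y = cadd g h'" using y by blast
        have hh: "cadd x h' \<in> H" using Hadd xH h' by blast
        have "mul (e' x) (e' y) = smul (eps g h') (mul (e x) (mul u (e h')))"
          using e'H[OF xH] e'gH[OF h'(1)] h' by (simp add: mul_smul_r)
        also have "\<dots> = smul (eps g h' * ((-1) ^ card (g \<inter> x)) * eps x h') (mul u (e (cadd x h')))"
          using braid[OF gc hc[OF xH] hc[OF h'(1)] uS eS[OF xH] eS[OF h'(1)]] emul[OF xH h'(1)]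
          by (simp add: mul_smul_r)
        also have "\<dots> = smul (eps x y) (e' (cadd x y))"
        proof -
          have "eps g h' * ((-1) ^ card (g \<inter> x)) * eps x h' = eps x y * eps g (cadd x h')"
            using sgn_eps[OF g(1) hC[OF xH]] b2[OF hC[OF xH] g(1) hC[OF h'(1)]] b2[OF g(1) hC[OF xH] hC[OF h'(1)]] h'
            by (simp add: mult_ac)
          then show ?thesis using e'gH[OF hh] h' cadd1 by simp
        qed
        finally show ?thesis .
      qed
    next
      case xnH: False
      then obtain h where h: "h \<in> H" "x = cadd g h" using x by blast
      show ?thesis
      proof (cases "y \<in> H")
        case yH: True
        have hh: "cadd h y \<in> H" using Hadd yH h by blast
        have "mul (e' x) (e' y) = smul (eps g h) (mul (mul u (e h)) (e y))"
          using e'H[OF yH] e'gH[OF h(1)] h by (simp add: mul_smul_l)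
        also have "\<dots> = smul (eps g h * eps h y) (mul u (e (cadd h y)))"
          using assoc[OF g(1) hC[OF h(1)] hC[OF yH] uS eS[OF h(1)] eS[OF yH]] emul[OF h(1) yH]
          by (simp add: mul_smul_r)
        also have "\<dots> = smul (eps x y) (e' (cadd x y))"
        proof -
          have "eps g h * eps h y = eps x y * eps g (cadd h y)"
            using b1[OF g(1) hC[OF h(1)] hC[OF yH]] b2[OF g(1) hC[OF h(1)] hC[OF yH]] h
              epm[OF g(1) hC[OF yH]]
            by auto
          then show ?thesis using e'gH[OF hh] h cadd2 by simp
        qed
        finally show ?thesis .
      next
        case False
        then obtain h' where h': "h' \<in> H" "y = cadd g h'" using y by blast
        have hh: "cadd h h' \<in> H" using Hadd h h' by blast
        have "mul (e' x) (e' y) = smul (eps g h * eps g h') (mul (mul u (e h)) (mul u (e h')))"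
          using e'gH[OF h(1)] e'gH[OF h'(1)] h h' by (simp add: mul_smul_l mul_smul_r)
        also have "mul (mul u (e h)) (mul u (e h')) = mul u (mul (e h) (mul u (e h')))"
          by (rule assoc[OF g(1) hC[OF h(1)] CS_cadd[OF g(1) hC[OF h'(1)]] uS eS[OF h(1)] ueS[OF h'(1)]])
        also have "\<dots> = smul ((-1) ^ card (g \<inter> h)) (mul u (mul u (mul (e h) (e h'))))"
          using braid[OF gc hc[OF h(1)] hc[OF h'(1)] uS eS[OF h(1)] eS[OF h'(1)]]
          by (simp add: mul_smul_r)
        also have "mul u (mul u (mul (e h) (e h'))) = mul (mul u u) (mul (e h) (e h'))"
          using assoc[OF g(1) g(1) CS_cadd[OF hC[OF h(1)] hC[OF h'(1)]] uS uS
              mul_deg0_deg0[OF hc[OF h(1)] hc[OF h'(1)] eS[OF h(1)] eS[OF h'(1)]]] by simp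
        also have "\<dots> = smul (eps g g * eps h h') (e (cadd h h'))"
          using uu emul[OF h(1) h'(1)] by (simp add: mul_smul_l mul_smul_r)
        finally have "mul (e' x) (e' y) = smul (eps g h * eps g h' * ((-1) ^ card (g \<inter> h)) * (eps g g * eps h h')) (e (cadd h h'))"
          by (simp add: mult_ac)
        also have "\<dots> = smul (eps x y) (e' (cadd x y))"
        proof -
          have "eps x y = eps g g * eps g h' * (eps h g * eps h h')"
            using h h' b1[OF g(1) hC[OF h(1)] CS_cadd[OF g(1) hC[OF h'(1)]]]
              b2[OF g(1) g(1) hC[OF h'(1)]] b2[OF hC[OF h(1)] g(1) hC[OF h'(1)]] by simp
          moreover have "eps g h * eps g h' * ((-1) ^ card (g \<inter> h)) * (eps g g * eps h h') =
              eps g g * eps g h' * (eps h g * eps h h')"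
            using sgn_eps[OF g(1) hC[OF h(1)]] epm[OF g(1) hC[OF h(1)]] by auto
          ultimately show ?thesis using e'H[OF hh] h h' cadd3 by simp
        qed
        finally show ?thesis .
      qed
    qed
  qed
  have "subgrp (H \<union> cadd g ` H)"
    unfolding subgrp_def
  proof (intro conjI ballI)
    show "H \<union> cadd g ` H \<subseteq> C" using HC CS_cadd g(1) by auto
    show "{} \<in> H \<union> cadd g ` H" using H0 by simp
    fix a b assume "a \<in> H \<union> cadd g ` H" "b \<in> H \<union> cadd g ` H"
    then show "cadd a b \<in> H \<union> cadd g ` H"
      using Hadd cadd1 cadd2 cadd3 by auto
  qed
  then show ?thesis using good' by blast
qed

end

context EFA begin

lemma finite_C: "finite C"
proof -
  have "C \<subseteq> Pow {..<l+r}" by (auto simp: CS_def codeword_def)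
  then show ?thesis by (rule finite_subset) simp
qed

lemma ex_good_aux: "subgrp H \<Longrightarrow> good H e \<Longrightarrow> \<exists>e. good C e"
proof (induction "card C - card H" arbitrary: H e rule: less_induct)
  case less
  show ?case
  proof (cases "H = C")
    case True then show ?thesis using less.prems by blast
  next
    case False
    then obtain g where g: "g \<in> C" "g \<notin> H" using less.prems(1) by (auto simp: subgrp_def)
    obtain e' where e': "good (H \<union> cadd g ` H) e'" "subgrp (H \<union> cadd g ` H)"
      using extend[OF less.prems g] by blast
    have sub: "H \<union> cadd g ` H \<subseteq> C" using e'(2) by (simp add: subgrp_def)
    have "g \<in> H \<union> cadd g ` H" using less.prems(1) by (force simp: subgrp_def)
    then have "H \<subset> H \<union> cadd g ` H" using g(2) by blast
    then have "card H < card (H \<union> cadd g ` H)"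
      by (rule psubset_card_mono[OF finite_subset[OF sub finite_C]])
    moreover have "card (H \<union> cadd g ` H) \<le> card C" by (rule card_mono[OF finite_C sub])
    ultimately have "card C - card (H \<union> cadd g ` H) < card C - card H" by simp
    then show ?thesis by (rule less.hyps[OF _ e'(2) e'(1)])
  qed
qed

lemma ex_good: "\<exists>e. good C e"
  using ex_good_aux[OF subgrp_base good_base] .

lemma main:
  "\<exists>\<phi> :: 'a \<Rightarrow> (nat set \<Rightarrow> complex).
           bij_betw \<phi> (AS0 l r S) (tw_carrier (CS l r S)) \<and>
           (\<forall>x\<in>AS0 l r S. \<forall>y\<in>AS0 l r S. \<phi> (x + y) = (\<lambda>\<alpha>. \<phi> x \<alpha> + \<phi> y \<alpha>)) \<and>
           (\<forall>c. \<forall>x\<in>AS0 l r S. \<phi> (smul c x) = (\<lambda>\<alpha>. c * \<phi> x \<alpha>)) \<and>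
           (\<forall>x\<in>AS0 l r S. \<forall>y\<in>AS0 l r S. \<phi> (mul x y) = tw_mult (CS l r S) eps (\<phi> x) (\<phi> y)) \<and>
           (\<forall>\<alpha>\<in>CS l r S. \<phi> ` S (deg0 \<alpha>) = tw_hom (CS l r S) \<alpha>)"
proof -
  obtain e where e: "good C e" using ex_good by blast
  have eS: "\<And>a. a \<in> C \<Longrightarrow> e a \<in> S (deg0 a)" and ene: "\<And>a. a \<in> C \<Longrightarrow> e a \<noteq> 0"
    and emul: "\<And>a b. a \<in> C \<Longrightarrow> b \<in> C \<Longrightarrow> mul (e a) (e b) = smul (eps a b) (e (cadd a b))"
    using e by (auto simp: good_def)
  define \<psi> where "\<psi> f = (\<Sum>\<alpha>\<in>C. smul (f \<alpha>) (e \<alpha>))" for f :: "nat set \<Rightarrow> complex"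
  have cpsum: "cp (deg0 b) (\<Sum>a\<in>C. x a) = x b" if "b \<in> C" "\<And>a. a \<in> C \<Longrightarrow> x a \<in> S (deg0 a)" for x b
  proof -
    have "cp (deg0 b) (\<Sum>a\<in>C. x a) = (\<Sum>a\<in>C. if a = b then x b else 0)"
      unfolding comp_sum
    proof (rule sum.cong)
      fix a assume a: "a \<in> C"
      show "cp (deg0 b) (x a) = (if a = b then x b else 0)"
        using comp_hom[OF deg0_in_Lam[OF CS_code[OF a]] that(2)[OF a], of "deg0 b"] deg0_inj by auto
    qed simp
    also have "\<dots> = x b" using that(1) finite_C by simp
    finally show ?thesis .
  qed
  have psi_cp: "cp (deg0 b) (\<psi> f) = smul (f b) (e b)" if "b \<in> C" for f b
    unfolding \<psi>_def by (rule cpsum[OF that]) (rule smul_in[OF deg0_in_Lam[OF CS_code] eS]; simp)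
  have inj: "inj_on \<psi> (tw_carrier C)"
  proof
    fix f g assume f: "f \<in> tw_carrier C" and g: "g \<in> tw_carrier C" and eq: "\<psi> f = \<psi> g"
    show "f = g"
    proof
      fix b show "f b = g b"
      proof (cases "b \<in> C")
        case True
        have "smul (f b) (e b) = smul (g b) (e b)" using psi_cp[OF True, of f] psi_cp[OF True, of g] eq by metis
        then have "f b = g b \<or> e b = 0" by (metis vs.scale_cancel_right)
        then show ?thesis using ene[OF True] by blast
      next
        case False then show ?thesis using f g by (simp add: tw_carrier_def)
      qed
    qed
  qed
  have img: "\<psi> ` tw_carrier C = AS0 l r S"
  proof
    show "\<psi> ` tw_carrier C \<subseteq> AS0 l r S"
    proof
      fix v assume "v \<in> \<psi> ` tw_carrier C"
      then obtain f where v: "v = \<psi> f" by blast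
      have "\<forall>a\<in>C. smul (f a) (e a) \<in> S (deg0 a)"
        using smul_in[OF deg0_in_Lam[OF CS_code] eS] by blast
      then show "v \<in> AS0 l r S" unfolding AS0_def v \<psi>_def by blast
    qed
    show "AS0 l r S \<subseteq> \<psi> ` tw_carrier C"
    proof
      fix v assume "v \<in> AS0 l r S"
      then obtain x where v: "v = (\<Sum>a\<in>C. x a)" and x: "\<forall>a\<in>C. x a \<in> S (deg0 a)"
        unfolding AS0_def by blast
      have "\<forall>a\<in>C. \<exists>c. x a = smul c (e a)"
        using one_dim[OF CS_code eS ene] x by blast
      then obtain c where c: "\<forall>a\<in>C. x a = smul (c a) (e a)" by metis
      define f where "f a = (if a \<in> C then c a else 0)" for a
      have "f \<in> tw_carrier C" by (simp add: f_def tw_carrier_def)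
      moreover have "\<psi> f = v" unfolding \<psi>_def v f_def using c by (intro sum.cong) auto
      ultimately show "v \<in> \<psi> ` tw_carrier C" by blast
    qed
  qed
  have bij: "bij_betw \<psi> (tw_carrier C) (AS0 l r S)" using inj img by (simp add: bij_betw_def)
  define \<phi> where "\<phi> = inv_into (tw_carrier C) \<psi>"
  have phi_eq: "\<phi> x = f" if "f \<in> tw_carrier C" "\<psi> f = x" for x f
    unfolding \<phi>_def using inv_into_f_eq[OF inj] that by blast
  have phi_in: "\<phi> x \<in> tw_carrier C" and psi_phi: "\<psi> (\<phi> x) = x" if "x \<in> AS0 l r S" for x
    using that img inj bij_betw_inv_into[OF bij] unfolding \<phi>_def
    by (auto simp: bij_betw_def f_inv_into_f)
  have p1: "bij_betw \<phi> (AS0 l r S) (tw_carrier C)" unfolding \<phi>_def by (rule bij_betw_inv_into[OF bij])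
  have p2: "\<phi> (x + y) = (\<lambda>\<alpha>. \<phi> x \<alpha> + \<phi> y \<alpha>)" if "x \<in> AS0 l r S" "y \<in> AS0 l r S" for x y
  proof (rule phi_eq)
    show "(\<lambda>\<alpha>. \<phi> x \<alpha> + \<phi> y \<alpha>) \<in> tw_carrier C" using phi_in that by (simp add: tw_carrier_def)
    show "\<psi> (\<lambda>\<alpha>. \<phi> x \<alpha> + \<phi> y \<alpha>) = x + y"
      using psi_phi that unfolding \<psi>_def by (simp add: vs.scale_left_distrib sum.distrib)
  qed
  have p3: "\<phi> (smul c x) = (\<lambda>\<alpha>. c * \<phi> x \<alpha>)" if "x \<in> AS0 l r S" for x c
  proof (rule phi_eq)
    show "(\<lambda>\<alpha>. c * \<phi> x \<alpha>) \<in> tw_carrier C" using phi_in that by (simp add: tw_carrier_def)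
    show "\<psi> (\<lambda>\<alpha>. c * \<phi> x \<alpha>) = smul c x"
    proof -
      have "smul c x = (\<Sum>\<alpha>\<in>C. smul c (smul (\<phi> x \<alpha>) (e \<alpha>)))"
        using psi_phi[OF that] unfolding \<psi>_def by (metis vs.scale_sum_right)
      then show ?thesis unfolding \<psi>_def by simp
    qed
  qed
  have tw_in: "tw_mult C eps f g \<in> tw_carrier C" for f g
  proof -
    have em: "{(a, b). a \<in> C \<and> b \<in> C \<and> cadd a b = c} = {}" if "c \<notin> C" for c
      using CS_cadd that by auto
    show ?thesis unfolding tw_carrier_def tw_mult_def
    proof (intro CollectI allI impI)
      fix c assume "c \<notin> C"
      then show "(\<Sum>(a, b)\<in>{(a, b). a \<in> C \<and> b \<in> C \<and> cadd a b = c}. eps a b * f a * g b) = 0"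
        using em[of c] by (metis (no_types, lifting) sum.empty)
    qed
  qed
  have psi_mul: "\<psi> (tw_mult C eps f g) = mul (\<psi> f) (\<psi> g)" for f g
  proof -
    define F where "F p = (case p of (a, b) \<Rightarrow> smul (eps a b * f a * g b) (e (cadd a b)))" for p
    have "mul (\<psi> f) (\<psi> g) = (\<Sum>b\<in>C. \<Sum>a\<in>C. F (a, b))"
      unfolding \<psi>_def mul_sum_l mul_sum_r
      by (intro sum.cong refl) (simp add: mul_smul_l mul_smul_r emul F_def mult_ac)
    also have "\<dots> = (\<Sum>a\<in>C. \<Sum>b\<in>C. F (a, b))" by (rule sum.swap)
    also have "\<dots> = (\<Sum>p\<in>C \<times> C. F p)" by (simp add: sum.cartesian_product)
    also have "\<dots> = (\<Sum>c\<in>C. \<Sum>p\<in>{p. p \<in> C \<times> C \<and> (case p of (a, b) \<Rightarrow> cadd a b) = c}. F p)"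
      by (rule sum.group[symmetric]) (use finite_C CS_cadd in auto)
    also have "\<dots> = \<psi> (tw_mult C eps f g)"
      unfolding \<psi>_def tw_mult_def
    proof (rule sum.cong[OF refl])
      fix c assume c: "c \<in> C"
      have set: "{p. p \<in> C \<times> C \<and> (case p of (a, b) \<Rightarrow> cadd a b) = c} = {(a, b). a \<in> C \<and> b \<in> C \<and> cadd a b = c}"
        by auto
      show "(\<Sum>p\<in>{p. p \<in> C \<times> C \<and> (case p of (a, b) \<Rightarrow> cadd a b) = c}. F p) =
        smul (\<Sum>(a, b)\<in>{(a, b). a \<in> C \<and> b \<in> C \<and> cadd a b = c}. eps a b * f a * g b) (e c)"
        unfolding set vs.scale_sum_left by (rule sum.cong) (auto simp: F_def)
    qed
    finally show ?thesis by simp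
  qed
  have p4: "\<phi> (mul x y) = tw_mult C eps (\<phi> x) (\<phi> y)" if "x \<in> AS0 l r S" "y \<in> AS0 l r S" for x y
    by (rule phi_eq[OF tw_in]) (simp add: psi_mul psi_phi that)
  have p5: "\<phi> ` S (deg0 a) = tw_hom C a" if a: "a \<in> C" for a
  proof -
    have psi_h: "\<psi> f = smul (f a) (e a)" if "f \<in> tw_hom C a" for f
    proof -
      have "\<psi> f = (\<Sum>b\<in>C. if b = a then smul (f a) (e a) else 0)"
        unfolding \<psi>_def by (rule sum.cong) (use that in \<open>auto simp: tw_hom_def\<close>)
      then show ?thesis using a finite_C by simp
    qed
    have "\<psi> ` tw_hom C a = S (deg0 a)"
    proof
      show "\<psi> ` tw_hom C a \<subseteq> S (deg0 a)"
        using psi_h smul_in[OF deg0_in_Lam[OF CS_code[OF a]] eS[OF a]] by auto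
      show "S (deg0 a) \<subseteq> \<psi> ` tw_hom C a"
      proof
        fix y assume y: "y \<in> S (deg0 a)"
        then obtain c where c: "y = smul c (e a)" using one_dim[OF CS_code[OF a] eS[OF a] ene[OF a]] by blast
        define f where "f b = (if b = a then c else 0)" for b
        have f: "f \<in> tw_hom C a" using a by (simp add: f_def tw_hom_def tw_carrier_def)
        then have "\<psi> f = y" using psi_h c by (simp add: f_def)
        then show "y \<in> \<psi> ` tw_hom C a" using f by blast
      qed
    qed
    moreover have "tw_hom C a \<subseteq> tw_carrier C" by (auto simp: tw_hom_def)
    ultimately show ?thesis unfolding \<phi>_def using inj by (metis inv_into_image_cancel)
  qed
  show ?thesis using p1 p2 p3 p4 p5 by blast
qed

end

theorem mainTheorem8:
  fixes l r :: nat
    and smul :: "complex \<Rightarrow> 'v::ab_group_add \<Rightarrow> 'v"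
    and mul :: "'v \<Rightarrow> 'v \<Rightarrow> 'v"
    and one :: 'v
    and S :: "lam \<Rightarrow> 'v set"
    and eps :: "nat set \<Rightarrow> nat set \<Rightarrow> complex"
  assumes simple: "simple_framed_algebra l r smul mul one S"
    and eps_pm: "\<forall>\<alpha>\<in>CS l r S. \<forall>\<beta>\<in>CS l r S. eps \<alpha> \<beta> \<in> {1, -1}"
    and eps_bimult1: "\<forall>\<alpha>\<in>CS l r S. \<forall>\<beta>\<in>CS l r S. \<forall>\<gamma>\<in>CS l r S.
                        eps (cadd \<alpha> \<beta>) \<gamma> = eps \<alpha> \<gamma> * eps \<beta> \<gamma>"
    and eps_bimult2: "\<forall>\<alpha>\<in>CS l r S. \<forall>\<beta>\<in>CS l r S. \<forall>\<gamma>\<in>CS l r S.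
                        eps \<alpha> (cadd \<beta> \<gamma>) = eps \<alpha> \<beta> * eps \<alpha> \<gamma>"
    and eps_diag: "\<forall>\<alpha>\<in>CS l r S. eps \<alpha> \<alpha> = (-1) powi (cwt l r \<alpha> div 2)"
    and eps_comm: "\<forall>\<alpha>\<in>CS l r S. \<forall>\<beta>\<in>CS l r S.
                     eps \<alpha> \<beta> * eps \<beta> \<alpha> = (-1) powi (cwt l r (cmul \<alpha> \<beta>))"
  shows "\<exists>\<phi> :: 'v \<Rightarrow> (nat set \<Rightarrow> complex).
           bij_betw \<phi> (AS0 l r S) (tw_carrier (CS l r S)) \<and>
           (\<forall>x\<in>AS0 l r S. \<forall>y\<in>AS0 l r S. \<phi> (x + y) = (\<lambda>\<alpha>. \<phi> x \<alpha> + \<phi> y \<alpha>)) \<and>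
           (\<forall>c. \<forall>x\<in>AS0 l r S. \<phi> (smul c x) = (\<lambda>\<alpha>. c * \<phi> x \<alpha>)) \<and>
           (\<forall>x\<in>AS0 l r S. \<forall>y\<in>AS0 l r S. \<phi> (mul x y) = tw_mult (CS l r S) eps (\<phi> x) (\<phi> y)) \<and>
           (\<forall>\<alpha>\<in>CS l r S. \<phi> ` S (deg0 \<alpha>) = tw_hom (CS l r S) \<alpha>)"
  proof -
  have sf: "framed_algebra l r smul mul one S" and si: "\<forall>M. is_ideal l r smul mul S M \<longrightarrow> M = {0} \<or> M = UNIV"
    using simple by (simp_all add: simple_framed_algebra_def)
  interpret EFA l r smul mul one S eps
    by (rule EFA.intro[OF SFA.intro[OF FA.intro[OF sf] SFA_axioms.intro[OF si]]
          EFA_axioms.intro[OF eps_pm eps_bimult1 eps_bimult2 eps_diag eps_comm]])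
  show ?thesis by (rule main)
qed

end
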